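(* Let $\mathcal H$ be a finite-dimensional Hilbert space, $H(t_i)=\sum_l E^i_l\Pi^i_l$, $H(t_f)=\sum_k E^f_k\Pi^f_k$ Hermitian with spectral projectors, $\beta>0$, $\gamma_{\beta,i}=e^{-\beta H(t_i)}/\mathcal Z_{\beta,i}$, $\gamma_{\beta,f}=e^{-\beta H(t_f)}/\mathcal Z_{\beta,f}$, $\Delta F=-\beta^{-1}\ln(\mathcal Z_{\beta,f}/\mathcal Z_{\beta,i})$. Let $\Phi[X]=\sum_\alpha A_\alpha XA_\alpha^\dagger$ be a CPTP map with a full-rank fixed point $\pi=\Phi[\pi]$, and let $\tilde\Phi[X]=\sum_\alpha\tilde A_\alpha X\tilde A_\alpha^\dagger$ with $\tilde A_\alpha=\pi^{1/2}A_\alpha^\dagger\pi^{-1/2}$. Let the forward and backward initial states be decomposed as $$\rho_i=(1-a)\gamma_{\beta,i}+a(1-c)\tau_d+ac\,\tau_c,\qquad \tilde\rho_i=(1-\tilde a)\gamma_{\beta,f}+\tilde a(1-\tilde c)\tilde\tau_d+\tilde a\tilde c\,\tilde\tau_c,$$ where $a,\tau$ (resp. $\tilde a,\tilde\tau$) are the weight of athermality and minimal athermal state of $\rho_i$ w.r.t. $\gamma_{\beta,i}$ (resp. of $\tilde\rho_i$ w.r.t. $\gamma_{\beta,f}$), and $\tau=(1-c)\tau_d+c\tau_c$ (resp. $\tilde\tau=(1-\tilde c)\tilde\tau_d+\tilde c\tilde\tau_c$) is the weight-of-coherence decomposition w.r.t. the eigenbasis of $H(t_i)$ (resp. $H(t_f)$).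 For an operator $\mathcal A$ set $p^i_l(\mathcal A)=\mathrm{Tr}(\mathcal A\Pi^i_l)$, $p^f_k(\mathcal A)=\mathrm{Tr}(\Phi[\mathcal A]\Pi^f_k)$, $\tilde p^i_k(\mathcal A)=\mathrm{Tr}(\mathcal A\Pi^f_k)$, $\tilde p^f_l(\mathcal A)=\mathrm{Tr}(\tilde\Phi[\mathcal A]\Pi^i_l)$, and $P_\Gamma(l,k)=p^i_l(\rho_i)p^f_k(\rho_i)$, $P_{\tilde\Gamma}(k,l)=\tilde p^i_k(\tilde\rho_i)\tilde p^f_l(\tilde\rho_i)$. Define $\Theta^{(i)}_l=\ln\!\big((1-a)+a(1-c)\tfrac{p^i_l(\tau_d)}{p^i_l(\gamma_{\beta,i})}\big)$, $\Sigma^{(i)}_l=\ln\!\big(1+\tfrac{ac\,p^i_l(\tau_c)}{(1-a)p^i_l(\gamma_{\beta,i})+a(1-c)p^i_l(\tau_d)}\big)$, and $\Theta^{(f)}_k,\Sigma^{(f)}_k$ by the same formulas with $p^i_l$ replaced by $p^f_k$; define $\tilde\Theta^{(i)}_k,\tilde\Sigma^{(i)}_k$ (resp. $\tilde\Theta^{(f)}_l,\tilde\Sigma^{(f)}_l$) by the same formulas with $(a,c,\tau_d,\tau_c,\gamma_{\beta,i})$ replaced by $(\tilde a,\tilde c,\tilde\tau_d,\tilde\tau_c,\gamma_{\beta,f})$ and $p^i_l$ replaced by $\tilde p^i_k$ (resp. $\tilde p^f_l$). Let $\Delta\sigma_{l,k}=\ln p^f_k(\gamma_{\beta,i})-\ln\tilde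 p^f_l(\gamma_{\beta,f})$, $\Delta\Theta_{l,k}=\Theta^{(i)}_l+\Theta^{(f)}_k-\tilde\Theta^{(i)}_k-\tilde\Theta^{(f)}_l$, $\Delta\Sigma_{l,k}=\Sigma^{(i)}_l+\Sigma^{(f)}_k-\tilde\Sigma^{(i)}_k-\tilde\Sigma^{(f)}_l$. Then, for every $(l,k)$ for which these quantities are well defined, $$\Delta s^{l,k}_{\rm tot}:=\ln\frac{P_\Gamma(l,k)}{P_{\tilde\Gamma}(k,l)}=\beta(\Delta E_{l,k}-\Delta F)+\Delta\sigma_{l,k}+\Delta\Theta_{l,k}+\Delta\Sigma_{l,k},\qquad \Delta E_{l,k}=E^f_k-E^i_l.$$
   Context: Weight of athermality: $A_w(\rho)=\min_{\tau\in\mathscr D(\mathcal H)}\{a\ge0:\rho=(1-a)\gamma+a\tau\}$ for a full-rank thermal reference state $\gamma$, with minimal athermal state $\tau$ the optimizer. Weight of coherence w.r.t. a basis: $C_w(\tau)=\min\{c\ge0:\tau=(1-c)\tau_d+c\tau_c,\ \tau_d\text{ diagonal in the basis},\ \tau_c\in\mathscr D(\mathcal H)\}$. Here $\Pi^i_l$ ($\Pi^f_k$) are the spectral projectors of $H(t_i)$ ($H(t_f)$), used in the eigenbasis-related statements as projectors onto eigenvectors. *)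

theory Defs
  imports "HOL-Analysis.Analysis"
begin

type_synonym ('n) op = "complex ^('n::finite) ^'n"

definition cinner :: "complex ^('n::finite) \<Rightarrow> complex ^'n \<Rightarrow> complex" where
  "cinner u v = (\<Sum>i\<in>UNIV. cnj (u $ i) * v $ i)"

definition adj :: "('n::finite) op \<Rightarrow> ('n::finite) op" where
  "adj A = (\<chi> i j. cnj (A $ j $ i))"

definition mtrace :: "('n::finite) op \<Rightarrow> complex" where
  "mtrace A = (\<Sum>i\<in>UNIV. A $ i $ i)"

definition psd :: "('n::finite) op \<Rightarrow> bool" where
  "psd A \<longleftrightarrow> (\<forall>x. cinner x (A *v x) \<in> \<real> \<and> 0 \<le> Re (cinner x (A *v x)))"

definition density :: "('n::finite) op \<Rightarrow> bool" where
  "density \<rho> \<longleftrightarrow> psd \<rho> \<and> mtrace \<rho> = 1"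

definition proj :: "complex ^('n::finite) \<Rightarrow> ('n::finite) op" where
  "proj v = (\<chi> i j. v $ i * cnj (v $ j))"

definition orthonormal_basis :: "('n \<Rightarrow> complex ^'n) \<Rightarrow> bool" where
  "orthonormal_basis e \<longleftrightarrow> (\<forall>l m. cinner (e l) (e m) = (if l = m then 1 else 0))"

definition hamiltonian :: "('n \<Rightarrow> real) \<Rightarrow> ('n \<Rightarrow> complex ^'n) \<Rightarrow> ('n::finite) op" where
  "hamiltonian E e = (\<Sum>l\<in>UNIV. E l *\<^sub>R proj (e l))"

definition exp_minus_beta_H :: "real \<Rightarrow> ('n \<Rightarrow> real) \<Rightarrow> ('n \<Rightarrow> complex ^'n) \<Rightarrow> ('n::finite) op" where
  "exp_minus_beta_H \<beta> E e = (\<Sum>l\<in>UNIV. exp (- \<beta> * E l) *\<^sub>R proj (e l))"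

definition partition_fn :: "real \<Rightarrow> ('n \<Rightarrow> real) \<Rightarrow> ('n \<Rightarrow> complex ^'n) \<Rightarrow> real" where
  "partition_fn \<beta> E e = Re (mtrace (exp_minus_beta_H \<beta> E e))"

definition gibbs :: "real \<Rightarrow> ('n \<Rightarrow> real) \<Rightarrow> ('n \<Rightarrow> complex ^'n) \<Rightarrow> ('n::finite) op" where
  "gibbs \<beta> E e = (1 / partition_fn \<beta> E e) *\<^sub>R exp_minus_beta_H \<beta> E e"

definition free_energy_diff :: "real \<Rightarrow> real \<Rightarrow> real \<Rightarrow> real" where
  "free_energy_diff \<beta> Zi Zf = - (1 / \<beta>) * ln (Zf / Zi)"

definition weight_athermality :: "('n::finite) op \<Rightarrow> ('n::finite) op \<Rightarrow> real \<Rightarrow> ('n::finite) op \<Rightarrow> bool" where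
  "weight_athermality \<gamma> \<rho> a \<tau> \<longleftrightarrow>
     0 \<le> a \<and> density \<tau> \<and> \<rho> = (1 - a) *\<^sub>R \<gamma> + a *\<^sub>R \<tau> \<and>
     (\<forall>a' \<tau>'. 0 \<le> a' \<and> density \<tau>' \<and> \<rho> = (1 - a') *\<^sub>R \<gamma> + a' *\<^sub>R \<tau>' \<longrightarrow> a \<le> a')"

definition diagonal_in :: "('n \<Rightarrow> complex ^'n) \<Rightarrow> ('n::finite) op \<Rightarrow> bool" where
  "diagonal_in e X \<longleftrightarrow> (\<forall>l m. l \<noteq> m \<longrightarrow> cinner (e l) (X *v e m) = 0)"

definition weight_coherence :: "('n \<Rightarrow> complex ^'n) \<Rightarrow> ('n::finite) op \<Rightarrow> real \<Rightarrow> ('n::finite) op \<Rightarrow> ('n::finite) op \<Rightarrow> bool" where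
  "weight_coherence e \<tau> c \<tau>d \<tau>c \<longleftrightarrow>
     0 \<le> c \<and> density \<tau>d \<and> diagonal_in e \<tau>d \<and> density \<tau>c \<and> \<tau> = (1 - c) *\<^sub>R \<tau>d + c *\<^sub>R \<tau>c \<and>
     (\<forall>c' \<tau>d' \<tau>c'. 0 \<le> c' \<and> density \<tau>d' \<and> diagonal_in e \<tau>d' \<and> density \<tau>c' \<and>
        \<tau> = (1 - c') *\<^sub>R \<tau>d' + c' *\<^sub>R \<tau>c' \<longrightarrow> c \<le> c')"

definition kraus_map :: "('k::finite \<Rightarrow> ('n::finite) op) \<Rightarrow> ('n::finite) op \<Rightarrow> ('n::finite) op" where
  "kraus_map A X = (\<Sum>\<alpha>\<in>UNIV. A \<alpha> ** X ** adj (A \<alpha>))"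

definition trace_preserving_kraus :: "('k::finite \<Rightarrow> ('n::finite) op) \<Rightarrow> bool" where
  "trace_preserving_kraus A \<longleftrightarrow> (\<Sum>\<alpha>\<in>UNIV. adj (A \<alpha>) ** A \<alpha>) = mat 1"

definition is_sqrt :: "('n::finite) op \<Rightarrow> ('n::finite) op \<Rightarrow> bool" where
  "is_sqrt S P \<longleftrightarrow> psd S \<and> S ** S = P"

text \<open>p(X) = Tr(X Pi) (real part; real for the Hermitian arguments used)\<close>
definition prob :: "('n::finite) op \<Rightarrow> ('n::finite) op \<Rightarrow> real" where
  "prob X P = Re (mtrace (X ** P))"

definition Theta_fn :: "real \<Rightarrow> real \<Rightarrow> real \<Rightarrow> real \<Rightarrow> real" where
  "Theta_fn a c pd pg = ln ((1 - a) + a * (1 - c) * (pd / pg))"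

definition Sigma_fn :: "real \<Rightarrow> real \<Rightarrow> real \<Rightarrow> real \<Rightarrow> real \<Rightarrow> real" where
  "Sigma_fn a c pd pc pg = ln (1 + a * c * pc / ((1 - a) * pg + a * (1 - c) * pd))"

definition TS_defined :: "real \<Rightarrow> real \<Rightarrow> real \<Rightarrow> real \<Rightarrow> real \<Rightarrow> bool" where
  "TS_defined a c pd pc pg \<longleftrightarrow> pg \<noteq> 0 \<and> (1 - a) + a * (1 - c) * (pd / pg) > 0 \<and>
     (1 - a) * pg + a * (1 - c) * pd \<noteq> 0 \<and> 1 + a * c * pc / ((1 - a) * pg + a * (1 - c) * pd) > 0"

end

theory Submission
  imports Defs
begin
lemma mm_scaleR_left: "((r::real) *\<^sub>R (X::'n::finite op)) ** Y = r *\<^sub>R (X ** Y)"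
  by (simp add: vec_eq_iff matrix_matrix_mult_def scaleR_sum_right)
lemma mm_scaleR_right: "(X::'n::finite op) ** ((r::real) *\<^sub>R Y) = r *\<^sub>R (X ** Y)"
  by (simp add: vec_eq_iff matrix_matrix_mult_def scaleR_sum_right)
lemma mm_add_right: "((X::'n::finite op) + Y) ** Z = X ** Z + Y ** Z"
  by (simp add: vec_eq_iff matrix_matrix_mult_def sum.distrib distrib_right)
lemma prob_add: "prob (X + Y) P = prob X P + prob Y P"
  unfolding prob_def mtrace_def by (simp add: mm_add_right sum.distrib)
lemma prob_scale: "prob ((r::real) *\<^sub>R X) P = r * prob X P"
  unfolding prob_def mtrace_def by (simp add: mm_scaleR_left sum_distrib_left)
lemma kraus_add: "kraus_map A (X + Y) = kraus_map A X + kraus_map A Y"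
  unfolding kraus_map_def by (simp add: matrix_add_ldistrib mm_add_right sum.distrib)
lemma kraus_scale: "kraus_map A ((r::real) *\<^sub>R X) = r *\<^sub>R kraus_map A X"
  unfolding kraus_map_def by (simp add: mm_scaleR_left mm_scaleR_right scaleR_sum_right)
lemma trace_proj: "mtrace (proj u ** proj v) = cinner v u * cinner u v"
proof -
  have "mtrace (proj u ** proj v) = (\<Sum>i\<in>UNIV. \<Sum>j\<in>UNIV. (u $ i * cnj (u $ j)) * (v $ j * cnj (v $ i)))"
    unfolding mtrace_def proj_def matrix_matrix_mult_def by simp
  also have "\<dots> = (\<Sum>i\<in>UNIV. \<Sum>j\<in>UNIV. (cnj (v $ i) * u $ i) * (cnj (u $ j) * v $ j))"
    by (intro sum.cong refl) (simp only: mult_ac)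
  also have "\<dots> = cinner v u * cinner u v"
    unfolding cinner_def by (simp only: sum_product)
  finally show ?thesis .
qed
lemma prob_proj: assumes "orthonormal_basis e" shows "prob (proj (e m)) (proj (e l)) = (if m = l then 1 else 0)"
  using assms unfolding prob_def orthonormal_basis_def by (simp add: trace_proj)
lemma prob_zero: "prob 0 P = 0"
  unfolding prob_def mtrace_def by simp
lemma prob_sum_gen: "finite I \<Longrightarrow> prob (\<Sum>m\<in>I. f m) P = (\<Sum>m\<in>I. prob (f m) P)"
  by (induct rule: finite_induct) (simp_all add: prob_zero prob_add)
lemma prob_sum: "prob (\<Sum>m\<in>UNIV. f m) P = (\<Sum>m\<in>(UNIV::'n::finite set). prob (f m) P)"
  by (rule prob_sum_gen) simp
lemma mtrace_add: "mtrace (X + Y) = mtrace X + mtrace Y"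
  unfolding mtrace_def by (simp add: sum.distrib)
lemma mtrace_scale: "mtrace ((r::real) *\<^sub>R X) = r *\<^sub>R mtrace X"
  unfolding mtrace_def by (simp add: scaleR_sum_right)
lemma mtrace_sum_gen: "finite I \<Longrightarrow> mtrace (\<Sum>m\<in>I. f m) = (\<Sum>m\<in>I. mtrace (f m))"
  by (induct rule: finite_induct) (simp_all add: mtrace_add, simp add: mtrace_def)
lemma gibbs_prob: assumes "orthonormal_basis e"
  shows "prob (gibbs \<beta> E e) (proj (e l)) = exp (- \<beta> * E l) / partition_fn \<beta> E e"
    and "partition_fn \<beta> E e > 0"
proof -
  have Z: "partition_fn \<beta> E e = (\<Sum>m\<in>UNIV. exp (- \<beta> * E m))"
  proof -
    have t: "mtrace (proj (e m)) = 1" for m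
      using assms unfolding orthonormal_basis_def mtrace_def proj_def cinner_def
      by (metis (no_types, lifting) mult.commute sum.cong vec_lambda_beta)
    show ?thesis unfolding partition_fn_def exp_minus_beta_H_def
      by (simp add: mtrace_sum_gen mtrace_scale t Re_sum)
  qed
  show "partition_fn \<beta> E e > 0" unfolding Z by (intro sum_pos) auto
  show "prob (gibbs \<beta> E e) (proj (e l)) = exp (- \<beta> * E l) / partition_fn \<beta> E e"
    unfolding gibbs_def exp_minus_beta_H_def prob_scale prob_sum
    by (simp add: prob_scale prob_proj[OF assms] if_distrib[of "\<lambda>x. _ * x"] cong: if_cong)
qed

lemma TS_key:
  assumes "TS_defined a c pd pc pg" "pg > 0" "pr = (1-a)*pg + a*((1-c)*pd + c*pc)"
  shows "pr > 0" and "Theta_fn a c pd pg + Sigma_fn a c pd pc pg = ln pr - ln pg"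
proof -
  define X where "X = (1-a)*pg + a*(1-c)*pd"
  have t1: "(1 - a) + a * (1 - c) * (pd / pg) = X / pg" using assms(2) unfolding X_def by (simp add: field_simps)
  have X: "X > 0" using assms(1,2) t1 unfolding TS_defined_def X_def by (simp add: zero_less_divide_iff)
  have t2: "1 + a * c * pc / ((1 - a) * pg + a * (1 - c) * pd) = pr / X"
    using X assms(3) unfolding X_def by (simp add: field_simps)
  show "pr > 0" using assms(1) t2 X unfolding TS_defined_def by (simp add: zero_less_divide_iff)
  then show "Theta_fn a c pd pg + Sigma_fn a c pd pc pg = ln pr - ln pg"
    unfolding Theta_fn_def Sigma_fn_def t1 t2 using X assms(2) by (simp add: ln_div)
qed

theorem mainTheorem4:
  fixes Ei Ef :: "'n::finite \<Rightarrow> real" and ei ef :: "'n \<Rightarrow> complex ^'n"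
    and \<beta> :: real and A :: "'k::finite \<Rightarrow> 'n op" and \<pi> S :: "'n op"
    and \<rho>i \<rho>ti \<tau> \<tau>d \<tau>c \<tau>t \<tau>td \<tau>tc :: "'n op"
    and a c a_t c_t :: real and l k :: 'n
  assumes ei: "orthonormal_basis ei" and ef: "orthonormal_basis ef"
    and beta: "\<beta> > 0"
    and TP: "trace_preserving_kraus A"
    and pi_state: "density \<pi>" and pi_full: "invertible \<pi>" and pi_fix: "kraus_map A \<pi> = \<pi>"
    and S_sqrt: "is_sqrt S \<pi>"
    and rho: "density \<rho>i" and rhot: "density \<rho>ti"
    and wa: "weight_athermality (gibbs \<beta> Ei ei) \<rho>i a \<tau>"
    and wc: "weight_coherence ei \<tau> c \<tau>d \<tau>c"
    and wat: "weight_athermality (gibbs \<beta> Ef ef) \<rho>ti a_t \<tau>t"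
    and wct: "weight_coherence ef \<tau>t c_t \<tau>td \<tau>tc"
  defines "\<gamma>i \<equiv> gibbs \<beta> Ei ei" and "\<gamma>f \<equiv> gibbs \<beta> Ef ef"
    and "p_i \<equiv> (\<lambda>X. prob X (proj (ei l)))"
    and "pf \<equiv> (\<lambda>X. prob (kraus_map A X) (proj (ef k)))"
    and "pti \<equiv> (\<lambda>X. prob X (proj (ef k)))"
    and "ptf \<equiv> (\<lambda>X. prob (kraus_map (\<lambda>\<alpha>. S ** adj (A \<alpha>) ** matrix_inv S) X) (proj (ei l)))"
  assumes wd_i: "TS_defined a c (p_i \<tau>d) (p_i \<tau>c) (p_i \<gamma>i)"
    and wd_f: "TS_defined a c (pf \<tau>d) (pf \<tau>c) (pf \<gamma>i)"
    and wd_ti: "TS_defined a_t c_t (pti \<tau>td) (pti \<tau>tc) (pti \<gamma>f)"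
    and wd_tf: "TS_defined a_t c_t (ptf \<tau>td) (ptf \<tau>tc) (ptf \<gamma>f)"
    and wd_sig: "pf \<gamma>i > 0" "ptf \<gamma>f > 0"
    and wd_P: "pti \<rho>ti * ptf \<rho>ti \<noteq> 0" "(p_i \<rho>i * pf \<rho>i) / (pti \<rho>ti * ptf \<rho>ti) > 0"
  shows "ln ((p_i \<rho>i * pf \<rho>i) / (pti \<rho>ti * ptf \<rho>ti)) =
      \<beta> * ((Ef k - Ei l) - free_energy_diff \<beta> (partition_fn \<beta> Ei ei) (partition_fn \<beta> Ef ef))
      + (ln (pf \<gamma>i) - ln (ptf \<gamma>f))
      + (Theta_fn a c (p_i \<tau>d) (p_i \<gamma>i) + Theta_fn a c (pf \<tau>d) (pf \<gamma>i)
         - Theta_fn a_t c_t (pti \<tau>td) (pti \<gamma>f) - Theta_fn a_t c_t (ptf \<tau>td) (ptf \<gamma>f))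
      + (Sigma_fn a c (p_i \<tau>d) (p_i \<tau>c) (p_i \<gamma>i) + Sigma_fn a c (pf \<tau>d) (pf \<tau>c) (pf \<gamma>i)
         - Sigma_fn a_t c_t (pti \<tau>td) (pti \<tau>tc) (pti \<gamma>f) - Sigma_fn a_t c_t (ptf \<tau>td) (ptf \<tau>tc) (ptf \<gamma>f))"
proof -
  have ri: "\<rho>i = (1-a) *\<^sub>R \<gamma>i + a *\<^sub>R ((1-c) *\<^sub>R \<tau>d + c *\<^sub>R \<tau>c)"
    using wa wc unfolding weight_athermality_def weight_coherence_def \<gamma>i_def by simp
  have rt: "\<rho>ti = (1-a_t) *\<^sub>R \<gamma>f + a_t *\<^sub>R ((1-c_t) *\<^sub>R \<tau>td + c_t *\<^sub>R \<tau>tc)"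
    using wat wct unfolding weight_athermality_def weight_coherence_def \<gamma>f_def by simp
  have lin1: "p_i \<rho>i = (1-a)*p_i \<gamma>i + a*((1-c)*p_i \<tau>d + c*p_i \<tau>c)"
    unfolding p_i_def ri by (simp add: prob_add prob_scale)
  have lin2: "pf \<rho>i = (1-a)*pf \<gamma>i + a*((1-c)*pf \<tau>d + c*pf \<tau>c)"
    unfolding pf_def ri by (simp add: prob_add prob_scale kraus_add kraus_scale)
  have lin3: "pti \<rho>ti = (1-a_t)*pti \<gamma>f + a_t*((1-c_t)*pti \<tau>td + c_t*pti \<tau>tc)"
    unfolding pti_def rt by (simp add: prob_add prob_scale)
  have lin4: "ptf \<rho>ti = (1-a_t)*ptf \<gamma>f + a_t*((1-c_t)*ptf \<tau>td + c_t*ptf \<tau>tc)"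
    unfolding ptf_def rt by (simp add: prob_add prob_scale kraus_add kraus_scale)
  define Zi where "Zi = partition_fn \<beta> Ei ei"
  define Zf where "Zf = partition_fn \<beta> Ef ef"
  have Zi: "Zi > 0" and Zf: "Zf > 0" unfolding Zi_def Zf_def using gibbs_prob ei ef by auto
  have g1: "p_i \<gamma>i = exp (- \<beta> * Ei l) / Zi" unfolding p_i_def \<gamma>i_def Zi_def using gibbs_prob(1)[OF ei] by simp
  have g3: "pti \<gamma>f = exp (- \<beta> * Ef k) / Zf" unfolding pti_def \<gamma>f_def Zf_def using gibbs_prob(1)[OF ef] by simp
  have g1p: "p_i \<gamma>i > 0" using g1 Zi by simp
  have g3p: "pti \<gamma>f > 0" using g3 Zf by simp
  note k1 = TS_key[OF wd_i g1p lin1]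
  note k2 = TS_key[OF wd_f wd_sig(1) lin2]
  note k3 = TS_key[OF wd_ti g3p lin3]
  note k4 = TS_key[OF wd_tf wd_sig(2) lin4]
  have lg1: "ln (p_i \<gamma>i) = - \<beta> * Ei l - ln Zi" using Zi by (simp add: g1 ln_div)
  have lg3: "ln (pti \<gamma>f) = - \<beta> * Ef k - ln Zf" using Zf by (simp add: g3 ln_div)
  have F: "\<beta> * free_energy_diff \<beta> Zi Zf = - (ln Zf - ln Zi)"
    unfolding free_energy_diff_def using beta Zi Zf by (simp add: ln_div)
  have L: "ln ((p_i \<rho>i * pf \<rho>i) / (pti \<rho>ti * ptf \<rho>ti)) = ln (p_i \<rho>i) + ln (pf \<rho>i) - ln (pti \<rho>ti) - ln (ptf \<rho>ti)"
    using k1(1) k2(1) k3(1) k4(1) by (simp add: ln_div ln_mult)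
  have D: "\<beta> * ((Ef k - Ei l) - free_energy_diff \<beta> Zi Zf) = \<beta> * Ef k - \<beta> * Ei l - \<beta> * free_energy_diff \<beta> Zi Zf"
    by (simp add: algebra_simps)
  show ?thesis
    using L k1(2) k2(2) k3(2) k4(2) lg1 lg3 F D unfolding Zi_def Zf_def by linarith
qed

end
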